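(* The second-order ordinary differential equation $$(\chi+\psi)^{2}\frac{d^{2}\psi}{d\chi^{2}}+(\chi+\psi)\left(\frac{d\psi}{d\chi}-2(2+\chi)\right)\frac{d\psi}{d\chi}+(6+4\chi+3\psi)\psi=0$$ for $\psi=\psi(\chi)$ admits no (nontrivial) Lie point symmetries.
   Context: This equation is the reduction of the Chazy equation $y'''-2yy''+3(y')^2=0$ by the invariants $\chi=xy$, $\psi=x^2y'$ of the scaling symmetry $x\partial_x-y\partial_y$. *)

theory Defs
  imports "HOL-Analysis.Analysis"
begin

definition px :: "(real \<times> real \<Rightarrow> real) \<Rightarrow> real \<times> real \<Rightarrow> real" where
  "px f = (\<lambda>(x, y). deriv (\<lambda>t. f (t, y)) x)"
definition py :: "(real \<times> real \<Rightarrow> real) \<Rightarrow> real \<times> real \<Rightarrow> real" where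
  "py f = (\<lambda>(x, y). deriv (\<lambda>t. f (x, t)) y)"

text \<open>C-infinity on an open set U: (Frechet) differentiable on U, and all partial
  derivatives are again C-infinity on U (greatest fixed point).\<close>
coinductive smooth2 :: "(real \<times> real) set \<Rightarrow> (real \<times> real \<Rightarrow> real) \<Rightarrow> bool" for U where
  "\<lbrakk> f differentiable_on U; smooth2 U (px f); smooth2 U (py f) \<rbrakk> \<Longrightarrow> smooth2 U f"

text \<open>The ODE F(x, y, y', y'') = 0 with x = chi, y = psi, p = y', q = y''.\<close>
definition odeF :: "real \<Rightarrow> real \<Rightarrow> real \<Rightarrow> real \<Rightarrow> real" where
  "odeF x y p q = (x + y)^2 * q + (x + y) * (p - 2 * (2 + x)) * p + (6 + 4 * x + 3 * y) * y"

text \<open>Prolongation coefficients of X = xi d/dx + eta d/dy.\<close>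
definition eta1 :: "(real \<times> real \<Rightarrow> real) \<Rightarrow> (real \<times> real \<Rightarrow> real) \<Rightarrow> real \<Rightarrow> real \<Rightarrow> real \<Rightarrow> real" where
  "eta1 xi eta x y p =
     px eta (x, y) + (py eta (x, y) - px xi (x, y)) * p - py xi (x, y) * p^2"

definition eta2 :: "(real \<times> real \<Rightarrow> real) \<Rightarrow> (real \<times> real \<Rightarrow> real) \<Rightarrow> real \<Rightarrow> real \<Rightarrow> real \<Rightarrow> real \<Rightarrow> real" where
  "eta2 xi eta x y p q =
     px (px eta) (x, y) + (2 * py (px eta) (x, y) - px (px xi) (x, y)) * p
     + (py (py eta) (x, y) - 2 * py (px xi) (x, y)) * p^2 - py (py xi) (x, y) * p^3
     + (py eta (x, y) - 2 * px xi (x, y) - 3 * py xi (x, y) * p) * q"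

definition prolongF :: "(real \<times> real \<Rightarrow> real) \<Rightarrow> (real \<times> real \<Rightarrow> real) \<Rightarrow> real \<Rightarrow> real \<Rightarrow> real \<Rightarrow> real \<Rightarrow> real" where
  "prolongF xi eta x y p q =
       xi (x, y) * deriv (\<lambda>t. odeF t y p q) x
     + eta (x, y) * deriv (\<lambda>t. odeF x t p q) y
     + eta1 xi eta x y p * deriv (\<lambda>t. odeF x y t q) p
     + eta2 xi eta x y p q * deriv (\<lambda>t. odeF x y p t) q"

text \<open>X = xi d/dx + eta d/dy (smooth on an open set U of the region where the
  equation is a genuine second-order ODE, x + y \<noteq> 0) is a Lie point symmetry
  iff its second prolongation annihilates F on the solution manifold F = 0.\<close>
definition lie_point_symmetry :: "(real \<times> real) set \<Rightarrow> (real \<times> real \<Rightarrow> real) \<Rightarrow> (real \<times> real \<Rightarrow> real) \<Rightarrow> bool" where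
  "lie_point_symmetry U xi eta \<longleftrightarrow>
     open U \<and> U \<subseteq> {(x, y). x + y \<noteq> 0} \<and> smooth2 U xi \<and> smooth2 U eta \<and>
     (\<forall>x y p q. (x, y) \<in> U \<longrightarrow> odeF x y p q = 0 \<longrightarrow> prolongF xi eta x y p q = 0)"

end

theory Submission
  imports Defs "HOL-Computational_Algebra.Polynomial"
begin


lemma smooth2_D: "smooth2 U f \<Longrightarrow> f differentiable_on U \<and> smooth2 U (px f) \<and> smooth2 U (py f)"
  by (erule smooth2.cases) auto

lemma hderiv:
  assumes "smooth2 U F" "open U" "(x,y) \<in> U"
  shows "((\<lambda>t. F (t,y)) has_real_derivative px F (x,y)) (at x)"
proof -
  have "F differentiable at (x,y)" using assms smooth2_D differentiable_on_eq_differentiable_at by blast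
  moreover have "(\<lambda>t. (t,y)) differentiable at x" by (auto intro!: derivative_intros simp: differentiable_def)
  ultimately have "(F \<circ> (\<lambda>t. (t,y))) differentiable at x"
    using differentiable_chain_at[of "\<lambda>t. (t,y)" x F] by simp
  then have "(\<lambda>t. F (t,y)) differentiable at x" by (simp add: o_def)
  then show ?thesis unfolding px_def by (simp add: DERIV_deriv_iff_real_differentiable)
qed

lemma vderiv:
  assumes "smooth2 U F" "open U" "(x,y) \<in> U"
  shows "((\<lambda>t. F (x,t)) has_real_derivative py F (x,y)) (at y)"
proof -
  have "F differentiable at (x,y)" using assms smooth2_D differentiable_on_eq_differentiable_at by blast
  moreover have "(\<lambda>t. (x,t)) differentiable at y" by (auto intro!: derivative_intros simp: differentiable_def)
  ultimately have "(F \<circ> (\<lambda>t. (x,t))) differentiable at y"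
    using differentiable_chain_at[of "\<lambda>t. (x,t)" y F] by simp
  then have "(\<lambda>t. F (x,t)) differentiable at y" by (simp add: o_def)
  then show ?thesis unfolding py_def by (simp add: DERIV_deriv_iff_real_differentiable)
qed

lemma deriv_local:
  assumes "open S" "x \<in> S" "\<And>t. t \<in> S \<Longrightarrow> g t = h t" "(h has_real_derivative D) (at x)"
  shows "deriv g x = D"
proof -
  have "(g has_real_derivative D) (at x)"
    using has_field_derivative_transform_within_open[OF assms(4) assms(1,2)] assms(3) by metis
  then show ?thesis by (rule DERIV_imp_deriv)
qed

lemma const_on:
  assumes "a < b" "x \<in> {a<..<b}" "y \<in> {a<..<b}"
    "\<And>t. t \<in> {a<..<b} \<Longrightarrow> (f has_real_derivative 0) (at t)"
  shows "f x = f y"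
  using DERIV_isconst3[OF assms] .

coinductive sm1 :: "real set \<Rightarrow> (real \<Rightarrow> real) \<Rightarrow> bool" for I where
  "(\<And>t. t \<in> I \<Longrightarrow> (g has_real_derivative g' t) (at t)) \<Longrightarrow> sm1 I g' \<Longrightarrow> sm1 I g"

lemma sm1_D: "sm1 I g \<Longrightarrow> \<exists>g'. (\<forall>t\<in>I. (g has_real_derivative g' t) (at t)) \<and> sm1 I g'"
  by (erule sm1.cases) auto

inductive alg :: "real set \<Rightarrow> (real \<Rightarrow> real) \<Rightarrow> bool" for I where
  leaf: "sm1 I g \<Longrightarrow> alg I g"
| cst: "alg I (\<lambda>_. k)"
| idt: "alg I (\<lambda>t. t)"
| inv: "(\<And>t. t \<in> I \<Longrightarrow> t + k \<noteq> 0) \<Longrightarrow> alg I (\<lambda>t. inverse (t + k))"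
| add: "alg I f \<Longrightarrow> alg I g \<Longrightarrow> alg I (\<lambda>t. f t + g t)"
| mul: "alg I f \<Longrightarrow> alg I g \<Longrightarrow> alg I (\<lambda>t. f t * g t)"

lemma alg_deriv: "alg I g \<Longrightarrow> \<exists>g'. (\<forall>t\<in>I. (g has_real_derivative g' t) (at t)) \<and> alg I g'"
proof (induction rule: alg.induct)
  case (leaf g) then show ?case using sm1_D alg.leaf by blast
next
  case (cst k) then show ?case by (intro exI[of _ "\<lambda>_. 0"]) (auto intro!: derivative_eq_intros alg.cst)
next
  case idt then show ?case by (intro exI[of _ "\<lambda>_. 1"]) (auto intro!: derivative_eq_intros alg.cst)
next
  case (inv k)
  show ?case
  proof (intro exI[of _ "\<lambda>t. (\<lambda>_. -1) t * (inverse (t+k) * inverse (t+k))"] conjI ballI)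
    fix t assume "t \<in> I"
    then show "((\<lambda>t. inverse (t + k)) has_real_derivative - 1 * (inverse (t + k) * inverse (t + k))) (at t)"
      using inv by (auto intro!: derivative_eq_intros simp: power2_eq_square)
  next
    show "alg I (\<lambda>t. (\<lambda>_. -1) t * (inverse (t+k) * inverse (t+k)))"
      by (intro alg.mul alg.cst alg.inv inv)
  qed
next
  case (add f g)
  then obtain f' g' where "\<forall>t\<in>I. (f has_real_derivative f' t) (at t)" "alg I f'"
    "\<forall>t\<in>I. (g has_real_derivative g' t) (at t)" "alg I g'" by blast
  then show ?case by (intro exI[of _ "\<lambda>t. f' t + g' t"]) (auto intro!: derivative_eq_intros alg.add)
next
  case (mul f g)
  then obtain f' g' where "\<forall>t\<in>I. (f has_real_derivative f' t) (at t)" "alg I f'"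
    "\<forall>t\<in>I. (g has_real_derivative g' t) (at t)" "alg I g'" by blast
  then show ?case using mul
    by (intro exI[of _ "\<lambda>t. f' t * g t + f t * g' t"]) (auto intro!: derivative_eq_intros alg.add alg.mul)
qed

lemma alg_sm1: "alg I g \<Longrightarrow> sm1 I g"
proof (coinduction arbitrary: g)
  case sm1
  then show ?case using alg_deriv by blast
qed

lemma alg_sub: "alg I f \<Longrightarrow> alg I g \<Longrightarrow> alg I (\<lambda>t. f t - g t)"
proof -
  assume "alg I f" "alg I g"
  then have "alg I (\<lambda>t. f t + (\<lambda>_. -1) t * g t)" by (intro alg.add alg.mul alg.cst)
  then show ?thesis by simp
qed

lemma sm1_restrict:
  assumes "smooth2 U F" "open U" "\<And>t. t \<in> I \<Longrightarrow> (t,y0) \<in> U"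
  shows "sm1 I (\<lambda>t. F (t,y0))"
  using assms(1)
proof (coinduction arbitrary: F)
  case sm1
  have d: "\<And>t. t \<in> I \<Longrightarrow> ((\<lambda>t. F (t,y0)) has_real_derivative px F (t,y0)) (at t)"
    using hderiv[OF sm1 assms(2) assms(3)] by blast
  have s: "smooth2 U (px F)" using smooth2_D[OF sm1] by blast
  show ?case
    apply (rule exI[of _ "\<lambda>t. F (t,y0)"], rule exI[of _ "\<lambda>t. px F (t,y0)"])
    using d s by blast
qed



lemma dF:
  "deriv (\<lambda>t. odeF t y p q) x = 2*(x+y)*q + (p-2*(2+x))*p - 2*(x+y)*p + 4*y"
  "deriv (\<lambda>t. odeF x t p q) y = 2*(x+y)*q + (p-2*(2+x))*p + 6 + 4*x + 6*y"
  "deriv (\<lambda>t. odeF x y t q) p = (x+y)*(2*p - 2*(2+x))"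
  "deriv (\<lambda>t. odeF x y p t) q = (x+y)^2"
  unfolding odeF_def
  by (rule DERIV_imp_deriv; auto intro!: derivative_eq_intros simp: algebra_simps power2_eq_square)+

lemma determining:
  assumes L: "lie_point_symmetry U xi eta" and xyU: "(x,y) \<in> U"
  defines "u \<equiv> x + y"
  defines "X0 \<equiv> xi (x,y)" and "X1 \<equiv> px xi (x,y)" and "X2 \<equiv> py xi (x,y)"
    and "Xxx \<equiv> px (px xi) (x,y)" and "Xxy \<equiv> py (px xi) (x,y)" and "Xyy \<equiv> py (py xi) (x,y)"
  defines "N0 \<equiv> eta (x,y)" and "N1 \<equiv> px eta (x,y)" and "N2 \<equiv> py eta (x,y)"
    and "Nxx \<equiv> px (px eta) (x,y)" and "Nxy \<equiv> py (px eta) (x,y)" and "Nyy \<equiv> py (py eta) (x,y)"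
  shows "X2 - u*Xyy = 0"
    and "- X0 - N0 + u*N2 - 2*u*(4+2*x)*X2+u^2*(Nyy-2*Xxy) = 0"
    and "X0*((4+2*x)-2*u)+(4+2*x)*N0+2*u*N1-u*(4+2*x)*X1+u^2*(2*Nxy-Xxx)+3*(6+4*x+3*y)*y*X2 = 0"
    and "X0*(4*y*u-2*(6+4*x+3*y)*y)+N0*(((6+4*x+3*y)+3*y)*u-2*(6+4*x+3*y)*y)-u^2*(4+2*x)*N1+u^3*Nxx-(6+4*x+3*y)*y*u*N2+2*(6+4*x+3*y)*y*u*X1 = 0"
proof -
  let ?E3 = "X2 - u*Xyy"
  let ?E2 = "- X0 - N0 + u*N2 - 2*u*(4+2*x)*X2+u^2*(Nyy-2*Xxy)"
  let ?E1 = "X0*((4+2*x)-2*u)+(4+2*x)*N0+2*u*N1-u*(4+2*x)*X1+u^2*(2*Nxy-Xxx)+3*(6+4*x+3*y)*y*X2"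
  let ?E0 = "X0*(4*y*u-2*(6+4*x+3*y)*y)+N0*(((6+4*x+3*y)+3*y)*u-2*(6+4*x+3*y)*y)-u^2*(4+2*x)*N1+u^3*Nxx-(6+4*x+3*y)*y*u*N2+2*(6+4*x+3*y)*y*u*X1"
  have s0: "u \<noteq> 0" using L xyU unfolding lie_point_symmetry_def u_def by auto
  have key: "?E0 + u*?E1*p + u*?E2*p^2 + u^2*?E3*p^3 = 0" for p
  proof -
    define q where "q = -(u*(p-2*(2+x))*p+(6+4*x+3*y)*y)/u^2"
    have qq: "u^2 * q = -(u*(p-2*(2+x))*p+(6+4*x+3*y)*y)" unfolding q_def using s0 by simp
    have "odeF x y p q = 0" unfolding odeF_def u_def[symmetric] using qq
      by (simp add: algebra_simps power2_eq_square)
    then have "prolongF xi eta x y p q = 0" using L xyU unfolding lie_point_symmetry_def by blast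
    then have "u^2 * prolongF xi eta x y p q = 0" by simp
    moreover have "u^2 * prolongF xi eta x y p q = u * (?E0 + u*?E1*p + u*?E2*p^2 + u^2*?E3*p^3)"
      unfolding prolongF_def dF eta1_def eta2_def
      unfolding X0_def[symmetric] X1_def[symmetric] X2_def[symmetric] Xxx_def[symmetric]
        Xxy_def[symmetric] Xyy_def[symmetric] N0_def[symmetric] N1_def[symmetric] N2_def[symmetric]
        Nxx_def[symmetric] Nxy_def[symmetric] Nyy_def[symmetric] 
      using qq unfolding u_def by algebra
    ultimately show ?thesis using s0 by simp
  qed
  have k0: "?E0 = 0" using key[of 0] by simp
  have k1: "u*?E1 + u*?E2 + u^2*?E3 = 0" using key[of 1] k0 by simp
  have k2: "- u*?E1 + u*?E2 - u^2*?E3 = 0" using key[of "-1"] k0 by simp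
  have k3: "2*u*?E1 + 4*u*?E2 + 8*u^2*?E3 = 0" using key[of 2] k0 by simp
  have a: "u*?E2 = 0" using k1 k2 by linarith
  have b: "u*?E1 + u^2*?E3 = 0" using k1 a by linarith
  have c: "2*u*?E1 + 8*u^2*?E3 = 0" using k3 a by linarith
  have d: "u^2*?E3 = 0" using b c by linarith
  have e: "u*?E1 = 0" using b d by linarith
  show "?E3 = 0" using d s0 by simp
  show "?E2 = 0" using a s0 by simp
  show "?E1 = 0" using e s0 by simp
  show "?E0 = 0" by (rule k0)
qed

lemma E1_id:
  fixes x t u w c ca cb cc e ea eb f fa fb g ga gb Xa Xb Xc Xxx Na Nb Nxy :: real
  assumes "u*w = 1" "t = u - x"
    and "Xa = e + (1/2)*u^2*c"
    and "Xb = ea + u*c + (1/2)*u^2*ca"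
    and "Xc = u*c"
    and "Xxx = eb + c + 2*u*ca + (1/2)*u^2*cb"
    and "Na = w*g - e + u*f + (7/2)*u^2*c + (1/4)*u^3*ca + (4/3)*x*u^2*c"
    and "Nb = 0 - w^2*g + w*ga + f - ea + u*fa + 7*u*c + (17/4)*u^2*ca + (4/3)*u^2*c + (1/4)*u^3*cb + (8/3)*x*u*c + (4/3)*x*u^2*ca"
    and "Nxy = 2*w^3*g - w^2*ga + fa + 7*c + (17/2)*u*ca + (8/3)*u*c + (3/4)*u^2*cb + (8/3)*x*c + (8/3)*x*u*ca"
  shows "(6*g + 2*x*g) + u*((0) + u*((6*f - 6*ea - 2*e + 2*x*f - 2*x*ea - 18*x*c - 3*x^2*c) + u*((4*fa - eb + 57*c + 16*x*c + (8/3)*x^2*c) + u*(((45/2)*ca + 16*c + (15/2)*x*ca) + u*((3/2)*cb))))) = u * (Xa*((4+2*x)-2*u)+(4+2*x)*Na+2*u*Nb-u*(4+2*x)*Xb+u^2*(2*Nxy-Xxx)+3*(6+4*x+3*t)*t*Xc)"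
  using assms(1) unfolding assms(2-9) by algebra
lemma E0_id:
  fixes x t u w c ca cb cc e ea eb f fa fb g ga gb Xa Xb Xc Xxx Na Nb Nc Nxx :: real
  assumes "u*w = 1" "t = u - x"
    and "Xa = e + (1/2)*u^2*c"
    and "Xb = ea + u*c + (1/2)*u^2*ca"
    and "Na = w*g - e + u*f + (7/2)*u^2*c + (1/4)*u^3*ca + (4/3)*x*u^2*c"
    and "Nb = 0 - w^2*g + w*ga + f - ea + u*fa + 7*u*c + (17/4)*u^2*ca + (4/3)*u^2*c + (1/4)*u^3*cb + (8/3)*x*u*c + (4/3)*x*u^2*ca"
    and "Nc = 0 - w^2*g + f + 7*u*c + (3/4)*u^2*ca + (8/3)*x*u*c"
    and "Nxx = 2*w^3*g - 2*w^2*ga + w*gb + 2*fa - eb + 7*c + u*fb + (31/2)*u*ca + (16/3)*u*c + 5*u^2*cb + (8/3)*u^2*ca + (1/4)*u^3*cc + (8/3)*x*c + (16/3)*x*u*ca + (4/3)*x*u^2*cb"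
  shows "(6*x*g + x^2*g) + u*((6*g + 2*x*g) + u*((0 - 6*ga + 3*g - 6*e - 2*x*ga + 18*x*f - 12*x*ea - 2*x*e + 3*x^2*f - 2*x^2*ea) + u*((gb - 16*f + 16*ea - 2*e + 2*x*f - 2*x*ea + 78*x*c + 45*x^2*c + (16/3)*x^3*c) + u*((0 - 2*fa - 3*f - eb + 6*ea - 78*c - 2*x*fa + (3/2)*x*ca - 29*x*c + (1/4)*x^2*ca + (8/3)*x^2*c) + u*((fb - (3/2)*ca - 16*c - (17/2)*x*ca - (32/3)*x*c - (8/3)*x^2*ca) + u*((4*cb + (41/12)*ca + (5/6)*x*cb) + u*((1/4)*cc))))))) = u * (Xa*(4*t*u-2*(6+4*x+3*t)*t)+Na*(((6+4*x+3*t)+3*t)*u-2*(6+4*x+3*t)*t)-u^2*(4+2*x)*Nb+u^3*Nxx-(6+4*x+3*t)*t*u*Nc+2*(6+4*x+3*t)*t*u*Xb)"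
  using assms(1) unfolding assms(2-8) by algebra


lemma poly_interval_zero:
  fixes p :: "real poly"
  assumes "a < b" "\<And>s. s \<in> {a<..<b} \<Longrightarrow> poly p s = 0"
  shows "p = 0"
proof (rule ccontr)
  assume "p \<noteq> 0"
  then have "finite {x. poly p x = 0}" by (rule poly_roots_finite)
  moreover have "{a<..<b} \<subseteq> {x. poly p x = 0}" using assms(2) by auto
  ultimately have "finite {a<..<b}" by (rule finite_subset[rotated])
  then show False using infinite_Ioo[OF assms(1)] by simp
qed

lemma alg_pow: "alg I f \<Longrightarrow> alg I (\<lambda>t. f t ^ n)"
  by (induction n) (auto intro: alg.cst alg.mul)

lemma alg_divc: "alg I f \<Longrightarrow> alg I (\<lambda>t. f t / k)"
proof -
  assume "alg I f"
  then have "alg I (\<lambda>t. f t * (\<lambda>_. inverse k) t)" by (intro alg.mul alg.cst)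
  then show ?thesis by (simp add: divide_inverse)
qed

lemma alg_shift: "alg I (\<lambda>t. t + k)"
  by (intro alg.add alg.idt alg.cst)

lemma zero_deriv_zero:
  assumes "open S" "x \<in> S" "\<And>t. t \<in> S \<Longrightarrow> g t = 0" "(g has_real_derivative D) (at x)"
  shows "D = 0"
proof -
  have "((\<lambda>t. 0) has_real_derivative D) (at x)"
    using has_field_derivative_transform_within_open[OF assms(4) assms(1,2)] assms(3) by metis
  moreover have "((\<lambda>t. 0::real) has_real_derivative 0) (at x)" by simp
  ultimately show ?thesis using DERIV_unique by blast
qed

lemma aux1: "(a::real) \<noteq> 0 \<Longrightarrow> A * inverse a - (a*A) * (inverse a * inverse a) = 0"
  by (simp add: field_simps)

lemma aux2: "(a::real) \<noteq> 0 \<Longrightarrow> W' * inverse a - W * (inverse a * inverse a)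
    - (a^2 * W' - a * W) * (inverse a * inverse a * inverse a) = 0"
  by (simp add: field_simps power2_eq_square)

lemma aux3: "(a::real) \<noteq> 0 \<Longrightarrow> W * inverse a + k * (inverse a * inverse a) / 2 = F
   \<Longrightarrow> W = F * a + - k / 2 * inverse a"
proof -
  assume a: "a \<noteq> 0" and h: "W * inverse a + k * (inverse a * inverse a) / 2 = F"
  have "F * a = W + k * inverse a / 2" unfolding h[symmetric] using a by (simp add: field_simps)
  then show ?thesis by (simp add: field_simps)
qed

lemma local_zero:
  assumes L: "lie_point_symmetry U xi eta" and z0: "(x0,y0) \<in> U"
  shows "xi (x0,y0) = 0 \<and> eta (x0,y0) = 0"
proof -
  have oU: "open U" and sU: "U \<subseteq> {(x, y). x + y \<noteq> 0}" and sx: "smooth2 U xi" and se: "smooth2 U eta"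
    using L unfolding lie_point_symmetry_def by auto
  obtain r where r: "r > 0" "ball (x0,y0) r \<subseteq> U" using oU z0 open_contains_ball by blast
  define d where "d = r/2"
  have d0: "d > 0" using r unfolding d_def by simp
  define I where "I = {x0-d<..<x0+d}"
  define J where "J = {y0-d<..<y0+d}"
  have oI: "open I" and oJ: "open J" unfolding I_def J_def by auto
  have x0I: "x0 \<in> I" and y0J: "y0 \<in> J" unfolding I_def J_def using d0 by auto
  have box: "(x,y) \<in> U" if "x \<in> I" "y \<in> J" for x y
  proof -
    have A: "0 \<le> dist x0 x" "0 \<le> dist y0 y" by auto
    have "sqrt ((dist x0 x)^2 + (dist y0 y)^2) \<le> sqrt ((dist x0 x + dist y0 y)^2)"
      by (rule real_sqrt_le_mono) (use A in \<open>simp add: power2_eq_square algebra_simps\<close>)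
    then have "dist (x0,y0) (x,y) \<le> dist x0 x + dist y0 y"
      using A by (simp add: dist_Pair_Pair)
    also have "\<dots> < r" using that unfolding I_def J_def d_def dist_real_def by auto
    finally show ?thesis using r by auto
  qed
  have nz: "x + y \<noteq> 0" if "x \<in> I" "y \<in> J" for x y using box[OF that] sU by auto
  have s_pyxi: "smooth2 U (py xi)" and s_pxxi: "smooth2 U (px xi)" and s_pyeta: "smooth2 U (py eta)"
    using smooth2_D sx se by blast+
  note DE = determining[OF L]
  define c where "c = (\<lambda>x. py xi (x,y0) * inverse (x + y0))"
  have S1a: "py xi (x,t) = c x * (x+t)" if xI: "x \<in> I" and tJ: "t \<in> J" for x t
  proof -
    let ?psi = "\<lambda>t. py xi (x,t) * inverse (x+t)"
    have "(?psi has_real_derivative 0) (at t')" if "t' \<in> J" for t'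
    proof -
      have nz': "x + t' \<noteq> 0" using nz xI that by blast
      have "(?psi has_real_derivative py (py xi) (x,t') * inverse (x+t') - py xi (x,t') * (inverse (x+t') * inverse (x+t'))) (at t')"
        using vderiv[OF s_pyxi oU box[OF xI that]] nz'
        by (auto intro!: derivative_eq_intros simp: power2_eq_square algebra_simps inverse_mult_distrib)
      moreover have h: "py xi (x,t') = (x+t') * py (py xi) (x,t')" using DE(1)[OF box[OF xI that]] by simp
      have "py (py xi) (x,t') * inverse (x+t') - py xi (x,t') * (inverse (x+t') * inverse (x+t')) = 0"
        unfolding h using aux1[OF nz'] by simp
      ultimately show ?thesis by simp
    qed
    then have "?psi t = ?psi y0" using const_on[of "y0-d" "y0+d" t y0 ?psi] tJ y0J d0 unfolding J_def by auto
    then show ?thesis unfolding c_def using nz[OF xI tJ] by (simp add: field_simps)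
  qed
  define e where "e = (\<lambda>x. xi (x,y0) - c x * (x+y0)^2/2)"
  have S1b: "xi (x,t) = c x * (x+t)^2/2 + e x" if xI: "x \<in> I" and tJ: "t \<in> J" for x t
  proof -
    let ?phi = "\<lambda>t. xi (x,t) - c x * (x+t)^2/2"
    have "(?phi has_real_derivative 0) (at t')" if "t' \<in> J" for t'
    proof -
      have "(?phi has_real_derivative py xi (x,t') - c x * (x+t')) (at t')"
        using vderiv[OF sx oU box[OF xI that]]
        by (auto intro!: derivative_eq_intros simp: power2_eq_square field_simps)
      then show ?thesis using S1a[OF xI that] by simp
    qed
    then have "?phi t = ?phi y0" using const_on[of "y0-d" "y0+d" t y0 ?phi] tJ y0J d0 unfolding J_def by auto
    then show ?thesis unfolding e_def by simp
  qed
  have inJ: "\<And>t. t \<in> I \<Longrightarrow> (t, y0) \<in> U" using box y0J by blast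
  have a_pyxi: "alg I (\<lambda>t. py xi (t,y0))" by (rule alg.leaf, rule sm1_restrict[OF s_pyxi oU inJ])
  have a_xi: "alg I (\<lambda>t. xi (t,y0))" by (rule alg.leaf, rule sm1_restrict[OF sx oU inJ])
  have a_eta: "alg I (\<lambda>t. eta (t,y0))" by (rule alg.leaf, rule sm1_restrict[OF se oU inJ])
  have a_pyeta: "alg I (\<lambda>t. py eta (t,y0))" by (rule alg.leaf, rule sm1_restrict[OF s_pyeta oU inJ])
  have inv0: "\<And>t. t \<in> I \<Longrightarrow> t + y0 \<noteq> 0" using nz y0J by blast
  have a_c: "alg I c" unfolding c_def by (intro alg.mul a_pyxi alg.inv inv0)
  have a_e: "alg I e" unfolding e_def by (intro alg_sub alg_divc alg.mul alg_pow alg_shift a_xi a_c)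
  obtain c1 where c1: "\<And>t. t \<in> I \<Longrightarrow> (c has_real_derivative c1 t) (at t)" and sc1: "sm1 I c1"
    using sm1_D[OF alg_sm1[OF a_c]] by blast
  obtain c2 where c2: "\<And>t. t \<in> I \<Longrightarrow> (c1 has_real_derivative c2 t) (at t)" and sc2: "sm1 I c2"
    using sm1_D[OF sc1] by blast
  obtain c3 where c3: "\<And>t. t \<in> I \<Longrightarrow> (c2 has_real_derivative c3 t) (at t)"
    using sm1_D[OF sc2] by blast
  obtain e1 where e1: "\<And>t. t \<in> I \<Longrightarrow> (e has_real_derivative e1 t) (at t)" and se1: "sm1 I e1"
    using sm1_D[OF alg_sm1[OF a_e]] by blast
  obtain e2 where e2: "\<And>t. t \<in> I \<Longrightarrow> (e1 has_real_derivative e2 t) (at t)"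
    using sm1_D[OF se1] by blast
  have S1c: "px xi (x,t) = e1 x + (x+t)*c x + (1/2)*(x+t)^2*c1 x" if xI: "x \<in> I" and tJ: "t \<in> J" for x t
  proof -
    have "deriv (\<lambda>s. xi (s,t)) x = e1 x + (x+t)*c x + (1/2)*(x+t)^2*c1 x"
      by (rule deriv_local[OF oI xI, where h="\<lambda>s. c s * (s+t)^2/2 + e s"])
         (auto simp: S1b tJ intro!: derivative_eq_intros c1 e1 xI simp: algebra_simps power2_eq_square)
    then show ?thesis unfolding px_def by simp
  qed
  have S1d: "py (px xi) (x,t) = c x + (x+t)*c1 x" if xI: "x \<in> I" and tJ: "t \<in> J" for x t
  proof -
    have "deriv (\<lambda>s. px xi (x,s)) t = c x + (x+t)*c1 x"
      by (rule deriv_local[OF oJ tJ, where h="\<lambda>s. e1 x + (x+s)*c x + (1/2)*(x+s)^2*c1 x"])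
         (auto simp: S1c xI intro!: derivative_eq_intros simp: algebra_simps power2_eq_square)
    then show ?thesis unfolding py_def by simp
  qed
  have S1e: "px (px xi) (x,t) = e2 x + c x + 2*(x+t)*c1 x + (1/2)*(x+t)^2*c2 x" if xI: "x \<in> I" and tJ: "t \<in> J" for x t
  proof -
    have "deriv (\<lambda>s. px xi (s,t)) x = e2 x + c x + 2*(x+t)*c1 x + (1/2)*(x+t)^2*c2 x"
      by (rule deriv_local[OF oI xI, where h="\<lambda>s. e1 s + (s+t)*c s + (1/2)*(s+t)^2*c1 s"])
         (auto simp: S1c tJ intro!: derivative_eq_intros c1 c2 e2 xI simp: algebra_simps power2_eq_square)
    then show ?thesis unfolding px_def by simp
  qed
  define Wf where "Wf = (\<lambda>x t. eta (x,t) + e x - (x+t)^2*(21/2+4*x)*c x/3 - c1 x*(x+t)^3/4)"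
  define Wd where "Wd = (\<lambda>x t. py eta (x,t) - 2*(x+t)*(21/2+4*x)*c x/3 - 3*c1 x*(x+t)^2/4)"
  define Wdd where "Wdd = (\<lambda>x t. py (py eta) (x,t) - 2*(21/2+4*x)*c x/3 - 3*c1 x*(x+t)/2)"
  have dWf: "((\<lambda>t. Wf x t) has_real_derivative Wd x t) (at t)" if "x \<in> I" "t \<in> J" for x t
    unfolding Wf_def Wd_def using vderiv[OF se oU box[OF that]]
    by (auto intro!: derivative_eq_intros simp: field_simps power2_eq_square power3_eq_cube)
  have dWd: "((\<lambda>t. Wd x t) has_real_derivative Wdd x t) (at t)" if "x \<in> I" "t \<in> J" for x t
    unfolding Wdd_def Wd_def using vderiv[OF s_pyeta oU box[OF that]]
    by (auto intro!: derivative_eq_intros simp: field_simps power2_eq_square power3_eq_cube)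
  have Eul: "(x+t)^2 * Wdd x t + (x+t) * Wd x t - Wf x t = 0" if xI: "x \<in> I" and tJ: "t \<in> J" for x t
  proof -
    have E2: "- (c x*(x+t)^2/2 + e x) - eta (x,t) + (x+t)*py eta (x,t) - 2*(x+t)*(4+2*x)*(c x*(x+t))
        + (x+t)^2*(py (py eta) (x,t) - 2*(c x + (x+t)*c1 x)) = 0"
      using DE(2)[OF box[OF xI tJ]] by (simp add: S1a S1b S1d xI tJ)
    then show ?thesis unfolding Wdd_def Wd_def Wf_def by algebra
  qed
  define kk where "kk = (\<lambda>x. (x+y0)^2 * Wd x y0 - (x+y0) * Wf x y0)"
  define f where "f = (\<lambda>x. Wf x y0 * inverse (x+y0) + kk x * (inverse (x+y0) * inverse (x+y0)) / 2)"
  define g where "g = (\<lambda>x. - kk x / 2)"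
  have Lam: "(x+t)^2 * Wd x t - (x+t) * Wf x t = kk x" if xI: "x \<in> I" and tJ: "t \<in> J" for x t
  proof -
    let ?L = "\<lambda>t. (x+t)^2 * Wd x t - (x+t) * Wf x t"
    have "(?L has_real_derivative 0) (at t')" if "t' \<in> J" for t'
    proof -
      have "(?L has_real_derivative (x+t')^2 * Wdd x t' + (x+t') * Wd x t' - Wf x t') (at t')"
        using dWf[OF xI that] dWd[OF xI that]
        by (auto intro!: derivative_eq_intros simp: algebra_simps power2_eq_square)
      then show ?thesis using Eul[OF xI that] by simp
    qed
    then have "?L t = ?L y0" using const_on[of "y0-d" "y0+d" t y0 ?L] tJ y0J d0 unfolding J_def by auto
    then show ?thesis unfolding kk_def by simp
  qed
  have WfFG: "Wf x t = f x * (x+t) + g x * inverse (x+t)" if xI: "x \<in> I" and tJ: "t \<in> J" for x t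
  proof -
    let ?O = "\<lambda>t. Wf x t * inverse (x+t) + kk x * (inverse (x+t) * inverse (x+t)) / 2"
    have "(?O has_real_derivative 0) (at t')" if "t' \<in> J" for t'
    proof -
      have nz': "x + t' \<noteq> 0" using nz xI that by blast
      have "(?O has_real_derivative Wd x t' * inverse (x+t') - Wf x t' * (inverse (x+t') * inverse (x+t'))
           - kk x * (inverse (x+t') * inverse (x+t') * inverse (x+t'))) (at t')"
        using dWf[OF xI that] nz'
        by (auto intro!: derivative_eq_intros simp: algebra_simps inverse_mult_distrib)
      moreover have "Wd x t' * inverse (x+t') - Wf x t' * (inverse (x+t') * inverse (x+t'))
           - kk x * (inverse (x+t') * inverse (x+t') * inverse (x+t')) = 0"
        using aux2[OF nz', of "Wd x t'" "Wf x t'"] Lam[OF xI that] by simp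
      ultimately show ?thesis by simp
    qed
    then have "?O t = ?O y0" using const_on[of "y0-d" "y0+d" t y0 ?O] tJ y0J d0 unfolding J_def by auto
    then have "?O t = f x" unfolding f_def by simp
    from aux3[OF nz[OF xI tJ] this] show ?thesis unfolding g_def by simp
  qed
  have S2: "eta (x,t) = inverse (x+t)*(g x) - (e x) + (x+t)*(f x) + (7/2)*(x+t)^2*(c x) + (1/4)*(x+t)^3*(c1 x) + (4/3)*x*(x+t)^2*(c x)" if xI: "x \<in> I" and tJ: "t \<in> J" for x t
  proof -
    have "eta (x,t) = Wf x t - e x + (x+t)^2*(21/2+4*x)*c x/3 + c1 x*(x+t)^3/4" unfolding Wf_def by simp
    also have "\<dots> = f x * (x+t) + g x * inverse (x+t) - e x + (x+t)^2*(21/2+4*x)*c x/3 + c1 x*(x+t)^3/4"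
      using WfFG[OF xI tJ] by simp
    finally show ?thesis by (simp add: field_simps)
  qed
  have a_Wf: "alg I (\<lambda>x. Wf x y0)" unfolding Wf_def
    by (intro alg_sub alg.add alg_divc alg.mul alg_pow alg_shift a_eta a_e a_c alg.leaf[OF sc1] alg.cst alg.idt)
  have a_Wd: "alg I (\<lambda>x. Wd x y0)" unfolding Wd_def
    by (intro alg_sub alg.add alg_divc alg.mul alg_pow alg_shift a_pyeta a_c alg.leaf[OF sc1] alg.cst alg.idt)
  have a_kk: "alg I kk" unfolding kk_def
    by (intro alg_sub alg.mul alg_pow alg_shift a_Wf a_Wd)
  have a_f: "alg I f" unfolding f_def
    by (intro alg.add alg_divc alg.mul alg.inv inv0 a_Wf a_kk)
  have a_g: "alg I g"
  proof -
    have "alg I (\<lambda>x. (\<lambda>_. -1/2) x * kk x)" by (intro alg.mul alg.cst a_kk)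
    then show ?thesis unfolding g_def by simp
  qed
  obtain f1 where f1: "\<And>t. t \<in> I \<Longrightarrow> (f has_real_derivative f1 t) (at t)" and sf1: "sm1 I f1"
    using sm1_D[OF alg_sm1[OF a_f]] by blast
  obtain f2 where f2: "\<And>t. t \<in> I \<Longrightarrow> (f1 has_real_derivative f2 t) (at t)"
    using sm1_D[OF sf1] by blast
  obtain g1 where g1: "\<And>t. t \<in> I \<Longrightarrow> (g has_real_derivative g1 t) (at t)" and sg1: "sm1 I g1"
    using sm1_D[OF alg_sm1[OF a_g]] by blast
  obtain g2 where g2: "\<And>t. t \<in> I \<Longrightarrow> (g1 has_real_derivative g2 t) (at t)"
    using sm1_D[OF sg1] by blast
  have S2y: "py eta (x,t) = - 1*(inverse (x+t))^2*(g x) + (f x) + 7*(x+t)*(c x) + (3/4)*(x+t)^2*(c1 x) + (8/3)*x*(x+t)*(c x)" if xI: "x \<in> I" and tJ: "t \<in> J" for x t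
  proof -
    have "deriv (\<lambda>s. eta (x,s)) t = - 1*(inverse (x+t))^2*(g x) + (f x) + 7*(x+t)*(c x) + (3/4)*(x+t)^2*(c1 x) + (8/3)*x*(x+t)*(c x)"
      apply (rule deriv_local[OF oJ tJ, where h="\<lambda>t. inverse (x+t)*(g x) - (e x) + (x+t)*(f x) + (7/2)*(x+t)^2*(c x) + (1/4)*(x+t)^3*(c1 x) + (4/3)*x*(x+t)^2*(c x)"])
         apply (use nz[OF xI tJ] in \<open>auto simp: S2 xI intro!: derivative_eq_intros simp del: power_inverse\<close>)
      apply (simp add: divide_simps power2_eq_square power3_eq_cube del: power_inverse, (simp add: algebra_simps)?)
      done
    then show ?thesis unfolding py_def by simp
  qed
  have S2x: "px eta (x,t) = - 1*(inverse (x+t))^2*(g x) + inverse (x+t)*(g1 x) + (f x) - (e1 x) + (x+t)*(f1 x) + 7*(x+t)*(c x) + (17/4)*(x+t)^2*(c1 x) + (4/3)*(x+t)^2*(c x) + (1/4)*(x+t)^3*(c2 x) + (8/3)*x*(x+t)*(c x) + (4/3)*x*(x+t)^2*(c1 x)" if xI: "x \<in> I" and tJ: "t \<in> J" for x t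
  proof -
    have "deriv (\<lambda>s. eta (s,t)) x = - 1*(inverse (x+t))^2*(g x) + inverse (x+t)*(g1 x) + (f x) - (e1 x) + (x+t)*(f1 x) + 7*(x+t)*(c x) + (17/4)*(x+t)^2*(c1 x) + (4/3)*(x+t)^2*(c x) + (1/4)*(x+t)^3*(c2 x) + (8/3)*x*(x+t)*(c x) + (4/3)*x*(x+t)^2*(c1 x)"
      apply (rule deriv_local[OF oI xI, where h="\<lambda>x. inverse (x+t)*(g x) - (e x) + (x+t)*(f x) + (7/2)*(x+t)^2*(c x) + (1/4)*(x+t)^3*(c1 x) + (4/3)*x*(x+t)^2*(c x)"])
        apply (use nz[OF xI tJ] in \<open>auto simp: S2 tJ intro!: derivative_eq_intros c1 c2 e1 f1 g1 xI simp del: power_inverse\<close>)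
      apply (simp add: divide_simps power2_eq_square power3_eq_cube del: power_inverse, (simp add: algebra_simps)?)
      done
    then show ?thesis unfolding px_def by simp
  qed
  have S2xy: "py (px eta) (x,t) = 2*(inverse (x+t))^3*(g x) - 1*(inverse (x+t))^2*(g1 x) + (f1 x) + 7*(c x) + (17/2)*(x+t)*(c1 x) + (8/3)*(x+t)*(c x) + (3/4)*(x+t)^2*(c2 x) + (8/3)*x*(c x) + (8/3)*x*(x+t)*(c1 x)" if xI: "x \<in> I" and tJ: "t \<in> J" for x t
  proof -
    have "deriv (\<lambda>s. px eta (x,s)) t = 2*(inverse (x+t))^3*(g x) - 1*(inverse (x+t))^2*(g1 x) + (f1 x) + 7*(c x) + (17/2)*(x+t)*(c1 x) + (8/3)*(x+t)*(c x) + (3/4)*(x+t)^2*(c2 x) + (8/3)*x*(c x) + (8/3)*x*(x+t)*(c1 x)"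
      apply (rule deriv_local[OF oJ tJ, where h="\<lambda>t. - 1*(inverse (x+t))^2*(g x) + inverse (x+t)*(g1 x) + (f x) - (e1 x) + (x+t)*(f1 x) + 7*(x+t)*(c x) + (17/4)*(x+t)^2*(c1 x) + (4/3)*(x+t)^2*(c x) + (1/4)*(x+t)^3*(c2 x) + (8/3)*x*(x+t)*(c x) + (4/3)*x*(x+t)^2*(c1 x)"])
        apply (use nz[OF xI tJ] in \<open>auto simp: S2x xI intro!: derivative_eq_intros simp del: power_inverse\<close>)
      apply (simp add: divide_simps power2_eq_square power3_eq_cube del: power_inverse, (simp add: algebra_simps)?)
      done
    then show ?thesis unfolding py_def by simp
  qed
  have S2xx: "px (px eta) (x,t) = 2*(inverse (x+t))^3*(g x) - 2*(inverse (x+t))^2*(g1 x) + inverse (x+t)*(g2 x) + 2*(f1 x) - (e2 x) + 7*(c x) + (x+t)*(f2 x) + (31/2)*(x+t)*(c1 x) + (16/3)*(x+t)*(c x) + 5*(x+t)^2*(c2 x) + (8/3)*(x+t)^2*(c1 x) + (1/4)*(x+t)^3*(c3 x) + (8/3)*x*(c x) + (16/3)*x*(x+t)*(c1 x) + (4/3)*x*(x+t)^2*(c2 x)" if xI: "x \<in> I" and tJ: "t \<in> J" for x t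
  proof -
    have "deriv (\<lambda>s. px eta (s,t)) x = 2*(inverse (x+t))^3*(g x) - 2*(inverse (x+t))^2*(g1 x) + inverse (x+t)*(g2 x) + 2*(f1 x) - (e2 x) + 7*(c x) + (x+t)*(f2 x) + (31/2)*(x+t)*(c1 x) + (16/3)*(x+t)*(c x) + 5*(x+t)^2*(c2 x) + (8/3)*(x+t)^2*(c1 x) + (1/4)*(x+t)^3*(c3 x) + (8/3)*x*(c x) + (16/3)*x*(x+t)*(c1 x) + (4/3)*x*(x+t)^2*(c2 x)"
      apply (rule deriv_local[OF oI xI, where h="\<lambda>x. - 1*(inverse (x+t))^2*(g x) + inverse (x+t)*(g1 x) + (f x) - (e1 x) + (x+t)*(f1 x) + 7*(x+t)*(c x) + (17/4)*(x+t)^2*(c1 x) + (4/3)*(x+t)^2*(c x) + (1/4)*(x+t)^3*(c2 x) + (8/3)*x*(x+t)*(c x) + (4/3)*x*(x+t)^2*(c1 x)"])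
        apply (use nz[OF xI tJ] in \<open>auto simp: S2x tJ intro!: derivative_eq_intros c1 c2 c3 e1 e2 f1 f2 g1 g2 xI simp del: power_inverse\<close>)
      apply (simp add: divide_simps power2_eq_square power3_eq_cube del: power_inverse, (simp add: algebra_simps)?)
      done
    then show ?thesis unfolding px_def by simp
  qed
  have P1: "poly (Poly [6*(g x) + 2*x*(g x), 0, 6*(f x) - 6*(e1 x) - 2*(e x) + 2*x*(f x) - 2*x*(e1 x) - 18*x*(c x) - 3*x^2*(c x), 4*(f1 x) - (e2 x) + 57*(c x) + 16*x*(c x) + (8/3)*x^2*(c x), (45/2)*(c1 x) + 16*(c x) + (15/2)*x*(c1 x), (3/2)*(c2 x)]) (x+t) = 0" if xI: "x \<in> I" and tJ: "t \<in> J" for x t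
  proof -
    have nz': "x + t \<noteq> 0" using nz[OF xI tJ] .
    have h0: "(x+t) * inverse (x+t) = 1" using nz' by simp
    have h1: "t = (x+t) - x" by simp
    have hX0: "xi (x,t) = (e x) + (1/2)*(x+t)^2*(c x)" by (subst S1b[OF xI tJ], simp)
    have hX1: "px xi (x,t) = (e1 x) + (x+t)*(c x) + (1/2)*(x+t)^2*(c1 x)" by (subst S1c[OF xI tJ], simp)
    have hX2: "py xi (x,t) = (x+t)*(c x)" by (subst S1a[OF xI tJ], simp)
    have hXxx: "px (px xi) (x,t) = (e2 x) + (c x) + 2*(x+t)*(c1 x) + (1/2)*(x+t)^2*(c2 x)" by (subst S1e[OF xI tJ], simp)
    have hN0: "eta (x,t) = inverse (x+t)*(g x) - (e x) + (x+t)*(f x) + (7/2)*(x+t)^2*(c x) + (1/4)*(x+t)^3*(c1 x) + (4/3)*x*(x+t)^2*(c x)" by (subst S2[OF xI tJ], simp)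
    have hN1: "px eta (x,t) = 0 - inverse (x+t)^2*(g x) + inverse (x+t)*(g1 x) + (f x) - (e1 x) + (x+t)*(f1 x) + 7*(x+t)*(c x) + (17/4)*(x+t)^2*(c1 x) + (4/3)*(x+t)^2*(c x) + (1/4)*(x+t)^3*(c2 x) + (8/3)*x*(x+t)*(c x) + (4/3)*x*(x+t)^2*(c1 x)" by (subst S2x[OF xI tJ], simp)
    have hNxy: "py (px eta) (x,t) = 2*inverse (x+t)^3*(g x) - inverse (x+t)^2*(g1 x) + (f1 x) + 7*(c x) + (17/2)*(x+t)*(c1 x) + (8/3)*(x+t)*(c x) + (3/4)*(x+t)^2*(c2 x) + (8/3)*x*(c x) + (8/3)*x*(x+t)*(c1 x)" by (subst S2xy[OF xI tJ], simp)
    note h = E1_id[where x=x and t=t and u="x+t" and w="inverse (x+t)" and c="c x" and ca="c1 x" and cb="c2 x" and e="e x" and ea="e1 x" and eb="e2 x" and f="f x" and fa="f1 x" and g="g x" and ga="g1 x" and Xa="xi (x,t)" and Xb="px xi (x,t)" and Xc="py xi (x,t)" and Xxx="px (px xi) (x,t)" and Na="eta (x,t)" and Nb="px eta (x,t)" and Nxy="py (px eta) (x,t)", OF h0 h1 hX0 hX1 hX2 hXxx hN0 hN1 hNxy]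
    have "(x+t) * 0 = 0" by simp
    with h[unfolded DE(3)[OF box[OF xI tJ]]] show ?thesis by simp
  qed
  have P0: "poly (Poly [6*x*(g x) + x^2*(g x), 6*(g x) + 2*x*(g x), 0 - 6*(g1 x) + 3*(g x) - 6*(e x) - 2*x*(g1 x) + 18*x*(f x) - 12*x*(e1 x) - 2*x*(e x) + 3*x^2*(f x) - 2*x^2*(e1 x), (g2 x) - 16*(f x) + 16*(e1 x) - 2*(e x) + 2*x*(f x) - 2*x*(e1 x) + 78*x*(c x) + 45*x^2*(c x) + (16/3)*x^3*(c x), 0 - 2*(f1 x) - 3*(f x) - (e2 x) + 6*(e1 x) - 78*(c x) - 2*x*(f1 x) + (3/2)*x*(c1 x) - 29*x*(c x) + (1/4)*x^2*(c1 x) + (8/3)*x^2*(c x), (f2 x) - (3/2)*(c1 x) - 16*(c x) - (17/2)*x*(c1 x) - (32/3)*x*(c x) - (8/3)*x^2*(c1 x), 4*(c2 x) + (41/12)*(c1 x) + (5/6)*x*(c2 x), (1/4)*(c3 x)]) (x+t) = 0" if xI: "x \<in> I" and tJ: "t \<in> J" for x t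
  proof -
    have nz': "x + t \<noteq> 0" using nz[OF xI tJ] .
    have h0: "(x+t) * inverse (x+t) = 1" using nz' by simp
    have h1: "t = (x+t) - x" by simp
    have hX0: "xi (x,t) = (e x) + (1/2)*(x+t)^2*(c x)" by (subst S1b[OF xI tJ], simp)
    have hX1: "px xi (x,t) = (e1 x) + (x+t)*(c x) + (1/2)*(x+t)^2*(c1 x)" by (subst S1c[OF xI tJ], simp)
    have hN0: "eta (x,t) = inverse (x+t)*(g x) - (e x) + (x+t)*(f x) + (7/2)*(x+t)^2*(c x) + (1/4)*(x+t)^3*(c1 x) + (4/3)*x*(x+t)^2*(c x)" by (subst S2[OF xI tJ], simp)
    have hN1: "px eta (x,t) = 0 - inverse (x+t)^2*(g x) + inverse (x+t)*(g1 x) + (f x) - (e1 x) + (x+t)*(f1 x) + 7*(x+t)*(c x) + (17/4)*(x+t)^2*(c1 x) + (4/3)*(x+t)^2*(c x) + (1/4)*(x+t)^3*(c2 x) + (8/3)*x*(x+t)*(c x) + (4/3)*x*(x+t)^2*(c1 x)" by (subst S2x[OF xI tJ], simp)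
    have hN2: "py eta (x,t) = 0 - inverse (x+t)^2*(g x) + (f x) + 7*(x+t)*(c x) + (3/4)*(x+t)^2*(c1 x) + (8/3)*x*(x+t)*(c x)" by (subst S2y[OF xI tJ], simp)
    have hNxx: "px (px eta) (x,t) = 2*inverse (x+t)^3*(g x) - 2*inverse (x+t)^2*(g1 x) + inverse (x+t)*(g2 x) + 2*(f1 x) - (e2 x) + 7*(c x) + (x+t)*(f2 x) + (31/2)*(x+t)*(c1 x) + (16/3)*(x+t)*(c x) + 5*(x+t)^2*(c2 x) + (8/3)*(x+t)^2*(c1 x) + (1/4)*(x+t)^3*(c3 x) + (8/3)*x*(c x) + (16/3)*x*(x+t)*(c1 x) + (4/3)*x*(x+t)^2*(c2 x)" by (subst S2xx[OF xI tJ], simp)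
    note h = E0_id[where x=x and t=t and u="x+t" and w="inverse (x+t)" and c="c x" and ca="c1 x" and cb="c2 x" and cc="c3 x" and e="e x" and ea="e1 x" and eb="e2 x" and f="f x" and fa="f1 x" and fb="f2 x" and g="g x" and ga="g1 x" and gb="g2 x" and Xa="xi (x,t)" and Xb="px xi (x,t)" and Na="eta (x,t)" and Nb="px eta (x,t)" and Nc="py eta (x,t)" and Nxx="px (px eta) (x,t)", OF h0 h1 hX0 hX1 hN0 hN1 hN2 hNxx]
    have "(x+t) * 0 = 0" by simp
    with h[unfolded DE(4)[OF box[OF xI tJ]]] show ?thesis by simp
  qed
  have Z1: "Poly [6*(g x) + 2*x*(g x), 0, 6*(f x) - 6*(e1 x) - 2*(e x) + 2*x*(f x) - 2*x*(e1 x) - 18*x*(c x) - 3*x^2*(c x), 4*(f1 x) - (e2 x) + 57*(c x) + 16*x*(c x) + (8/3)*x^2*(c x), (45/2)*(c1 x) + 16*(c x) + (15/2)*x*(c1 x), (3/2)*(c2 x)] = 0" if xI: "x \<in> I" for x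
  proof (rule poly_interval_zero[of "x+y0-d" "x+y0+d"])
    show "x+y0-d < x+y0+d" using d0 by simp
  next
    fix s assume "s \<in> {x+y0-d<..<x+y0+d}"
    then have tJ: "s - x \<in> J" unfolding J_def by auto
    show "poly (Poly [6*(g x) + 2*x*(g x), 0, 6*(f x) - 6*(e1 x) - 2*(e x) + 2*x*(f x) - 2*x*(e1 x) - 18*x*(c x) - 3*x^2*(c x), 4*(f1 x) - (e2 x) + 57*(c x) + 16*x*(c x) + (8/3)*x^2*(c x), (45/2)*(c1 x) + 16*(c x) + (15/2)*x*(c1 x), (3/2)*(c2 x)]) s = 0" using P1[OF xI tJ] by simp
  qed
  have Z0: "Poly [6*x*(g x) + x^2*(g x), 6*(g x) + 2*x*(g x), 0 - 6*(g1 x) + 3*(g x) - 6*(e x) - 2*x*(g1 x) + 18*x*(f x) - 12*x*(e1 x) - 2*x*(e x) + 3*x^2*(f x) - 2*x^2*(e1 x), (g2 x) - 16*(f x) + 16*(e1 x) - 2*(e x) + 2*x*(f x) - 2*x*(e1 x) + 78*x*(c x) + 45*x^2*(c x) + (16/3)*x^3*(c x), 0 - 2*(f1 x) - 3*(f x) - (e2 x) + 6*(e1 x) - 78*(c x) - 2*x*(f1 x) + (3/2)*x*(c1 x) - 29*x*(c x) + (1/4)*x^2*(c1 x) + (8/3)*x^2*(c x), (f2 x) - (3/2)*(c1 x) - 16*(c x) - (17/2)*x*(c1 x) - (32/3)*x*(c x) - (8/3)*x^2*(c1 x), 4*(c2 x) + (41/12)*(c1 x) + (5/6)*x*(c2 x),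 (1/4)*(c3 x)] = 0" if xI: "x \<in> I" for x
  proof (rule poly_interval_zero[of "x+y0-d" "x+y0+d"])
    show "x+y0-d < x+y0+d" using d0 by simp
  next
    fix s assume "s \<in> {x+y0-d<..<x+y0+d}"
    then have tJ: "s - x \<in> J" unfolding J_def by auto
    show "poly (Poly [6*x*(g x) + x^2*(g x), 6*(g x) + 2*x*(g x), 0 - 6*(g1 x) + 3*(g x) - 6*(e x) - 2*x*(g1 x) + 18*x*(f x) - 12*x*(e1 x) - 2*x*(e x) + 3*x^2*(f x) - 2*x^2*(e1 x), (g2 x) - 16*(f x) + 16*(e1 x) - 2*(e x) + 2*x*(f x) - 2*x*(e1 x) + 78*x*(c x) + 45*x^2*(c x) + (16/3)*x^3*(c x), 0 - 2*(f1 x) - 3*(f x) - (e2 x) + 6*(e1 x) - 78*(c x) - 2*x*(f1 x) + (3/2)*x*(c1 x) - 29*x*(c x) + (1/4)*x^2*(c1 x) + (8/3)*x^2*(c x), (f2 x) - (3/2)*(c1 x) - 16*(c x) - (17/2)*x*(c1 x) - (32/3)*x*(c x) - (8/3)*x^2*(c1 x), 4*(c2 x) + (41/12)*(c1 x) + (5/6)*x*(c2 x), (1/4)*(c3 x)]) s = 0" using P0[OF xI tJ] by simp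
  qed
  have hc2: "c2 x = 0" if xI: "x \<in> I" for x using Z1[OF xI] by simp
  have hc1: "c1 x = 0" if xI: "x \<in> I" for x using Z0[OF xI] hc2[OF xI] by simp
  have hc: "c x = 0" if xI: "x \<in> I" for x using Z1[OF xI] hc1[OF xI] by simp
  have hg: "g x = 0" if xI: "x \<in> I" for x
  proof -
    have a: "(x+3) * g x = 0" using Z1[OF xI] by (simp add: algebra_simps)
    have b: "x * (x+6) * g x = 0" using Z0[OF xI] by (simp add: algebra_simps power2_eq_square)
    show ?thesis
    proof (rule ccontr)
      assume "g x \<noteq> 0"
      then have "x = -3" using a by simp
      then show False using b \<open>g x \<noteq> 0\<close> by simp
    qed
  qed
  have hg1: "g1 x = 0" if xI: "x \<in> I" for x
    by (rule zero_deriv_zero[OF oI xI _ g1[OF xI]]) (rule hg)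
  have hg2: "g2 x = 0" if xI: "x \<in> I" for x
    by (rule zero_deriv_zero[OF oI xI _ g2[OF xI]]) (rule hg1)
  have hfe: "f x = e1 x \<and> e x = 0" if xI: "x \<in> I" for x
  proof -
    have a: "6*(f x) - 6*(e1 x) - 2*(e x) + 2*x*(f x) - 2*x*(e1 x) = 0"
      using Z1[OF xI] hc[OF xI] by simp
    have b: "- 16*(f x) + 16*(e1 x) - 2*(e x) + 2*x*(f x) - 2*x*(e1 x) = 0"
      using Z0[OF xI] hc[OF xI] hg2[OF xI] by simp
    have fe: "f x = e1 x" using a b by linarith
    then show ?thesis using a by simp
  qed
  have he1: "e1 x0 = 0"
    by (rule zero_deriv_zero[OF oI x0I _ e1[OF x0I]]) (use hfe in blast)
  have xi0: "xi (x0,y0) = 0" using S1b[OF x0I y0J] hc[OF x0I] hfe[OF x0I] by simp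
  have eta0: "eta (x0,y0) = 0" using S2[OF x0I y0J] hc[OF x0I] hc1[OF x0I] hg[OF x0I] hfe[OF x0I] he1 by simp
  show ?thesis using xi0 eta0 by simp
qed

theorem mainTheorem5:
  fixes U :: "(real \<times> real) set" and xi eta :: "real \<times> real \<Rightarrow> real"
  assumes "lie_point_symmetry U xi eta"
  shows "\<forall>z\<in>U. xi z = 0 \<and> eta z = 0"
  using local_zero[OF assms] by auto

end
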